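(* Let $\rho\in(0,\infty)$ and $d=d(L)\to0$ with $dL\to\infty$. Let $h\in\mathcal D(\hat A)$ and $H(\mu)=\mu(h)$. Then $$\lim_{N/L\to\rho}\ \sup_{\eta\in\Omega_{L,N}}\Big|\frac1{dL}\mathfrak L_{L,N}\big(H\circ\hat\mu_{L,N}^{(\cdot)}\big)(\eta)-\hat\mu_{L,N}^{(\eta)}(\hat Ah)\Big|=0.$$
   Context: Inclusion process: $\Omega_{L,N}=\{\eta\in\mathbb N_0^L:\sum_x\eta_x=N\}$, $\mathfrak L_{L,N}f(\eta)=\sum_{x\ne y}\eta_x(d+\eta_y)[f(\eta^{x,y})-f(\eta)]$, $\eta^{x,y}=\eta-e^x+e^y$; "$N/L\to\rho$" means $N,L\to\infty$ with $N/L\to\rho$. $\overline{\mathbb R}_+=[0,\infty]$; $\hat\mu^{(\eta)}_{L,N}=\sum_x\frac{\eta_x}N\delta_{dL\eta_x/N}$. $\hat Ah(z)=zh''(z)+(2-z)h'(z)+(h(0)-h(z))$ on $\mathcal D(\hat A)=\{h\in C(\overline{\mathbb R}_+):h(\infty)=0,h|_{\mathbb R_+}\in C_c^3(\mathbb R_+)\}\cup\{\text{constants}\}$. *)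

theory Defs
  imports "HOL-Analysis.Analysis"
begin

definition Omega :: "nat \<Rightarrow> nat \<Rightarrow> (nat \<Rightarrow> nat) set" where
  "Omega L N = {\<eta>. (\<forall>x\<ge>L. \<eta> x = 0) \<and> (\<Sum>x<L. \<eta> x) = N}"

definition move :: "(nat \<Rightarrow> nat) \<Rightarrow> nat \<Rightarrow> nat \<Rightarrow> (nat \<Rightarrow> nat)" where
  "move \<eta> x y = (\<lambda>z. if z = x then \<eta> x - 1 else if z = y then \<eta> y + 1 else \<eta> z)"

definition gen :: "nat \<Rightarrow> real \<Rightarrow> ((nat \<Rightarrow> nat) \<Rightarrow> real) \<Rightarrow> (nat \<Rightarrow> nat) \<Rightarrow> real" where
  "gen L d f \<eta> = (\<Sum>x<L. \<Sum>y\<in>{..<L} - {x}.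
      real (\<eta> x) * (d + real (\<eta> y)) * (f (move \<eta> x y) - f \<eta>))"

text \<open>hat mu^{(eta)}_{L,N} integrated against h: sum_x eta_x/N * h(d L eta_x / N).\<close>
definition muhat :: "nat \<Rightarrow> nat \<Rightarrow> real \<Rightarrow> (nat \<Rightarrow> nat) \<Rightarrow> (real \<Rightarrow> real) \<Rightarrow> real" where
  "muhat L N d \<eta> h = (\<Sum>x<L. real (\<eta> x) / real N * h (d * real L * real (\<eta> x) / real N))"

definition D1 :: "(real \<Rightarrow> real) \<Rightarrow> real \<Rightarrow> real" where
  "D1 h x = vector_derivative h (at x within {0..})"

definition C3_half :: "(real \<Rightarrow> real) \<Rightarrow> bool" where
  "C3_half h \<longleftrightarrow> (\<exists>h1 h2 h3. (\<forall>x\<ge>0.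
       (h has_vector_derivative h1 x) (at x within {0..}) \<and>
       (h1 has_vector_derivative h2 x) (at x within {0..}) \<and>
       (h2 has_vector_derivative h3 x) (at x within {0..})) \<and>
     continuous_on {0..} h3)"

text \<open>Domain of hat A (functions restricted to the finite part [0,oo);
  compact support gives h(oo)=0 and continuity on [0,oo]).\<close>
definition DA :: "(real \<Rightarrow> real) set" where
  "DA = {h. (C3_half h \<and> (\<exists>R. \<forall>x\<ge>R. h x = 0)) \<or> (\<exists>c. \<forall>x\<ge>0. h x = c)}"

definition Ahat :: "(real \<Rightarrow> real) \<Rightarrow> real \<Rightarrow> real" where
  "Ahat h z = z * D1 (D1 h) z + (2 - z) * D1 h z + (h 0 - h z)"

end

theory Submission
  imports Defs
begin

lemma nontriv0: "(0::real) \<le> u \<Longrightarrow> at u within {0..} \<noteq> bot"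
proof
  assume "0 \<le> u" "at u within {0..} = bot"
  have "at u within {u..} \<le> at u within {0..}" using \<open>0\<le>u\<close> by (intro at_le) auto
  then have "at_right u \<le> (bot :: real filter)" using \<open>at u within {0..} = bot\<close>
    by (simp add: at_within_Ici_at_right)
  then show False using le_bot trivial_limit_at_right_real by blast
qed

lemma zero_deriv_beyond:
  fixes f f' :: "real \<Rightarrow> real"
  assumes "\<forall>x\<ge>0. (f has_vector_derivative f' x) (at x within {0..})"
    and "0 \<le> R" and "\<forall>x>R. f x = 0"
  shows "\<forall>x>R. f' x = 0"
proof (intro allI impI)
  fix x assume x: "x > R"
  have "interior {0::real..} = {0<..}" by (rule interior_Ici[of "-1"]) simp
  then have "at x within {0..} = at x" using x assms(2) by (intro at_within_interior) auto
  moreover have "(f has_vector_derivative f' x) (at x within {0..})" using assms(1) x assms(2) by auto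
  ultimately have d1: "(f has_vector_derivative f' x) (at x)" by simp
  have d2: "(f has_vector_derivative 0) (at x)"
    by (rule has_vector_derivative_transform_within_open[of "\<lambda>_. 0" 0 x "{R<..}"])
       (use x assms(3) in auto)
  show "f' x = 0" using vector_derivative_unique_at[OF d1 d2] .
qed

lemma bounded_beyond:
  fixes f :: "real \<Rightarrow> real"
  assumes "continuous_on {0..} f" "\<forall>x>R. f x = 0"
  shows "\<exists>M\<ge>0. \<forall>x\<ge>0. \<bar>f x\<bar> \<le> M"
proof -
  have "compact (f ` {0..R})"
    by (rule compact_continuous_image) (auto intro: continuous_on_subset[OF assms(1)])
  then obtain B where B: "\<forall>y\<in>f ` {0..R}. \<bar>y\<bar> \<le> B"
    using compact_imp_bounded bounded_real by blast
  show ?thesis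
  proof (intro exI[of _ "max B 0"] conjI allI impI)
    fix x :: real assume "0 \<le> x"
    show "\<bar>f x\<bar> \<le> max B 0"
    proof (cases "x \<le> R")
      case True then show ?thesis using B \<open>0\<le>x\<close> by force
    next
      case False then show ?thesis using assms(2) by auto
    qed
  qed simp
qed

lemma times_bound:
  fixes f :: "real \<Rightarrow> real"
  assumes "\<forall>x\<ge>0. \<bar>f x\<bar> \<le> M" "\<forall>x>R. f x = 0" "0 \<le> R"
  shows "\<forall>x\<ge>0. \<bar>x * f x\<bar> \<le> R * M"
proof (intro allI impI)
  fix x :: real assume "0 \<le> x"
  show "\<bar>x * f x\<bar> \<le> R * M"
  proof (cases "x \<le> R")
    case True
    have "\<bar>x * f x\<bar> = x * \<bar>f x\<bar>" using \<open>0\<le>x\<close> by (simp add: abs_mult)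
    also have "\<dots> \<le> R * M" using True assms(1) \<open>0\<le>x\<close>
      by (meson abs_ge_zero mult_mono order_trans)
    finally show ?thesis .
  next
    case False then show ?thesis using assms(1,2,3) \<open>0\<le>x\<close>
      by (metis abs_ge_zero abs_zero mult_nonneg_nonneg mult_zero_right not_le order_trans)
  qed
qed

lemma taylor3_bound:
  fixes f0 f1 f2 f3 :: "real \<Rightarrow> real"
  assumes t: "0 \<le> t"
    and d0: "\<And>s. s \<in> {0..t} \<Longrightarrow> (f0 has_real_derivative f1 s) (at s within {0..t})"
    and d1: "\<And>s. s \<in> {0..t} \<Longrightarrow> (f1 has_real_derivative f2 s) (at s within {0..t})"
    and d2: "\<And>s. s \<in> {0..t} \<Longrightarrow> (f2 has_real_derivative f3 s) (at s within {0..t})"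
    and z: "f0 0 = 0" "f1 0 = 0" "f2 0 = 0"
    and M: "\<And>s. s \<in> {0..t} \<Longrightarrow> \<bar>f3 s\<bar> \<le> M"
  shows "\<bar>f0 t\<bar> \<le> M * t ^ 3"
proof -
  have b2: "\<bar>f2 s\<bar> \<le> M * t" if "s \<in> {0..t}" for s
  proof -
    have "norm (f2 s - f2 0) \<le> M * norm (s - 0)"
      by (rule field_differentiable_bound[of "{0..t}"]) (use d2 M that t in auto)
    moreover have "M * norm (s - 0) \<le> M * t"
      using that M[of 0] t by (intro mult_left_mono) auto
    ultimately show ?thesis using z by simp
  qed
  have b1: "\<bar>f1 s\<bar> \<le> M * t * t" if "s \<in> {0..t}" for s
  proof -
    have "norm (f1 s - f1 0) \<le> (M * t) * norm (s - 0)"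
      by (rule field_differentiable_bound[of "{0..t}"]) (use d1 b2 that t in auto)
    moreover have "(M*t) * norm (s - 0) \<le> M * t * t"
      using that M[of 0] t by (intro mult_left_mono) auto
    ultimately show ?thesis using z by simp
  qed
  have "norm (f0 t - f0 0) \<le> (M * t * t) * norm (t - 0)"
    by (rule field_differentiable_bound[of "{0..t}"]) (use d0 b1 t in auto)
  then show ?thesis using z t by (simp add: power3_eq_cube mult_ac)
qed

lemma shift_plus:
  fixes f f' :: "real \<Rightarrow> real"
  assumes "\<forall>v\<ge>0. (f has_real_derivative f' v) (at v within {0..})" "0 \<le> u" "s \<in> {0..a}"
  shows "((\<lambda>s. f (u+s)) has_real_derivative f' (u+s)) (at s within {0..a})"
proof -
  have "(f has_real_derivative f' (u+s)) (at ((\<lambda>s. u+s) s) within ((\<lambda>s. u+s) ` {0..a}))"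
    by (rule DERIV_subset[OF assms(1)[rule_format]]) (use assms in auto)
  moreover have "((\<lambda>s. u+s) has_real_derivative 1) (at s within {0..a})"
    by (auto intro!: derivative_eq_intros)
  ultimately show ?thesis using DERIV_image_chain by (fastforce simp: o_def)
qed

lemma shift_minus:
  fixes f f' :: "real \<Rightarrow> real"
  assumes "\<forall>v\<ge>0. (f has_real_derivative f' v) (at v within {0..})" "a \<le> u" "s \<in> {0..a}"
  shows "((\<lambda>s. f (u-s)) has_real_derivative - f' (u-s)) (at s within {0..a})"
proof -
  have "(f has_real_derivative f' (u-s)) (at ((\<lambda>s. u-s) s) within ((\<lambda>s. u-s) ` {0..a}))"
    by (rule DERIV_subset[OF assms(1)[rule_format]]) (use assms in auto)
  moreover have "((\<lambda>s. u-s) has_real_derivative -1) (at s within {0..a})"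
    by (auto intro!: derivative_eq_intros)
  ultimately show ?thesis using DERIV_image_chain by (fastforce simp: o_def)
qed

lemma taylor_cons:
  fixes p0 p1 p2 p3 :: "real \<Rightarrow> real"
  assumes d0: "\<forall>v\<ge>0. (p0 has_real_derivative p1 v) (at v within {0..})"
    and d1: "\<forall>v\<ge>0. (p1 has_real_derivative p2 v) (at v within {0..})"
    and d2: "\<forall>v\<ge>0. (p2 has_real_derivative p3 v) (at v within {0..})"
    and B1: "\<forall>v\<ge>0. \<bar>p1 v\<bar> \<le> M1" and B2: "\<forall>v\<ge>0. \<bar>p2 v\<bar> \<le> M2"
    and B3: "\<forall>v\<ge>0. \<bar>p3 v\<bar> \<le> M3"
  shows "\<And>u a. 0 \<le> u \<Longrightarrow> 0 \<le> a \<Longrightarrow> \<bar>p0 (u+a) - p0 u - a * p1 u - a^2/2 * p2 u\<bar> \<le> M3 * a^3"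
    and "\<And>u a. a \<le> u \<Longrightarrow> 0 \<le> a \<Longrightarrow> \<bar>p0 (u-a) - p0 u + a * p1 u - a^2/2 * p2 u\<bar> \<le> M3 * a^3"
    and "\<And>u. 0 \<le> u \<Longrightarrow> \<bar>p1 u - p1 0\<bar> \<le> M2 * u"
    and "\<And>u a. 0 \<le> u \<Longrightarrow> 0 \<le> a \<Longrightarrow> \<bar>p0 (u+a) - p0 u\<bar> \<le> M1 * a"
    and "\<And>u a. a \<le> u \<Longrightarrow> 0 \<le> a \<Longrightarrow> \<bar>p0 (u-a) - p0 u\<bar> \<le> M1 * a"
proof -
  fix u a :: real assume u: "0 \<le> u" and a: "0 \<le> a"
  have "\<bar>(\<lambda>s. p0 (u+s) - p0 u - s * p1 u - s^2/2 * p2 u) a\<bar> \<le> M3 * a^3"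
  proof (rule taylor3_bound[OF a])
    fix s assume s: "s \<in> {0..a}"
    show "((\<lambda>s. p0 (u+s) - p0 u - s * p1 u - s^2/2 * p2 u) has_real_derivative
        (\<lambda>s. p1 (u+s) - p1 u - s * p2 u) s) (at s within {0..a})"
      using shift_plus[OF d0 u s] by (auto intro!: derivative_eq_intros)
    show "((\<lambda>s. p1 (u+s) - p1 u - s * p2 u) has_real_derivative
        (\<lambda>s. p2 (u+s) - p2 u) s) (at s within {0..a})"
      using shift_plus[OF d1 u s] by (auto intro!: derivative_eq_intros)
    show "((\<lambda>s. p2 (u+s) - p2 u) has_real_derivative
        (\<lambda>s. p3 (u+s)) s) (at s within {0..a})"
      using shift_plus[OF d2 u s] by (auto intro!: derivative_eq_intros)
    show "\<bar>p3 (u+s)\<bar> \<le> M3" using B3 u s by auto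
  qed auto
  then show "\<bar>p0 (u+a) - p0 u - a * p1 u - a^2/2 * p2 u\<bar> \<le> M3 * a^3" by simp
next
  fix u a :: real assume u: "a \<le> u" and a: "0 \<le> a"
  have "\<bar>(\<lambda>s. p0 (u-s) - p0 u + s * p1 u - s^2/2 * p2 u) a\<bar> \<le> M3 * a^3"
  proof (rule taylor3_bound[OF a])
    fix s assume s: "s \<in> {0..a}"
    show "((\<lambda>s. p0 (u-s) - p0 u + s * p1 u - s^2/2 * p2 u) has_real_derivative
        (\<lambda>s. - p1 (u-s) + p1 u - s * p2 u) s) (at s within {0..a})"
      using shift_minus[OF d0 u s] by (auto intro!: derivative_eq_intros)
    show "((\<lambda>s. - p1 (u-s) + p1 u - s * p2 u) has_real_derivative
        (\<lambda>s. p2 (u-s) - p2 u) s) (at s within {0..a})"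
      using shift_minus[OF d1 u s] by (auto intro!: derivative_eq_intros)
    show "((\<lambda>s. p2 (u-s) - p2 u) has_real_derivative
        (\<lambda>s. - p3 (u-s)) s) (at s within {0..a})"
      using shift_minus[OF d2 u s] by (auto intro!: derivative_eq_intros)
    show "\<bar>- p3 (u-s)\<bar> \<le> M3" using B3 u s by auto
  qed auto
  then show "\<bar>p0 (u-a) - p0 u + a * p1 u - a^2/2 * p2 u\<bar> \<le> M3 * a^3" by simp
next
  fix u :: real assume u: "0 \<le> u"
  have "norm (p1 u - p1 0) \<le> M2 * norm (u - 0)"
    by (rule field_differentiable_bound[of "{0..u}" p1 p2])
       (use B2 u in \<open>auto intro!: DERIV_subset[OF d1[rule_format]]\<close>)
  then show "\<bar>p1 u - p1 0\<bar> \<le> M2 * u" using u by simp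
next
  fix u a :: real assume u: "0 \<le> u" and a: "0 \<le> a"
  have "norm (p0 (u+a) - p0 u) \<le> M1 * norm (u + a - u)"
    by (rule field_differentiable_bound[of "{u..u+a}" p0 p1])
       (use B1 u a in \<open>auto intro!: DERIV_subset[OF d0[rule_format]]\<close>)
  then show "\<bar>p0 (u+a) - p0 u\<bar> \<le> M1 * a" using a by simp
next
  fix u a :: real assume u: "a \<le> u" and a: "0 \<le> a"
  have "norm (p0 (u-a) - p0 u) \<le> M1 * norm (u - a - u)"
    by (rule field_differentiable_bound[of "{u-a..u}" p0 p1])
       (use B1 u a in \<open>auto intro!: DERIV_subset[OF d0[rule_format]]\<close>)
  then show "\<bar>p0 (u-a) - p0 u\<bar> \<le> M1 * a" using a by simp
qed

lemma DA_interface: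
  assumes "h \<in> DA"
  shows "\<exists>p0 p1 p2 p3 M1 M2 M3 R. 0 \<le> M1 \<and> 0 \<le> M2 \<and> 0 \<le> M3 \<and> 0 \<le> R \<and>
     (\<forall>u\<ge>0. p0 u = u * h u) \<and> (\<forall>u\<ge>0. Ahat h u = p2 u - p1 u + p1 0) \<and>
     (\<forall>v\<ge>0. (p0 has_real_derivative p1 v) (at v within {0..})) \<and>
     (\<forall>v\<ge>0. (p1 has_real_derivative p2 v) (at v within {0..})) \<and>
     (\<forall>v\<ge>0. (p2 has_real_derivative p3 v) (at v within {0..})) \<and>
     (\<forall>v\<ge>0. \<bar>p1 v\<bar> \<le> M1) \<and> (\<forall>v\<ge>0. \<bar>p2 v\<bar> \<le> M2) \<and> (\<forall>v\<ge>0. \<bar>p3 v\<bar> \<le> M3) \<and>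
     (\<forall>u a. 0 \<le> a \<longrightarrow> a \<le> u \<longrightarrow>
        u * \<bar>p0 (u+a) + p0 (u-a) - 2 * p0 u\<bar> \<le> (R + a) * (a^2 * M2 + 2 * a^3 * M3))"
proof -
  from assms consider "C3_half h \<and> (\<exists>R. \<forall>x\<ge>R. h x = 0)" | "\<exists>c. \<forall>x\<ge>0. h x = c"
    unfolding DA_def by blast
  then show ?thesis
  proof cases
    case 1
    then obtain h1 h2 h3 R0 where
      D0: "\<forall>x\<ge>0. (h has_vector_derivative h1 x) (at x within {0..})" and
      D1': "\<forall>x\<ge>0. (h1 has_vector_derivative h2 x) (at x within {0..})" and
      D2: "\<forall>x\<ge>0. (h2 has_vector_derivative h3 x) (at x within {0..})" and
      c3: "continuous_on {0..} h3" and hz0: "\<forall>x\<ge>R0. h x = 0"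
      unfolding C3_half_def by blast
    define R where "R = max R0 0"
    have R: "0 \<le> R" by (simp add: R_def)
    have hz': "\<forall>x\<ge>R. h x = 0" using hz0 by (auto simp: R_def)
    have hz: "\<forall>x>R. h x = 0" using hz' by auto
    have h1z: "\<forall>x>R. h1 x = 0" by (rule zero_deriv_beyond[OF D0 R hz])
    have h2z: "\<forall>x>R. h2 x = 0" by (rule zero_deriv_beyond[OF D1' R h1z])
    have h3z: "\<forall>x>R. h3 x = 0" by (rule zero_deriv_beyond[OF D2 R h2z])
    have c0: "continuous_on {0..} h" by (rule continuous_on_vector_derivative) (use D0 in auto)
    have c1: "continuous_on {0..} h1" by (rule continuous_on_vector_derivative) (use D1' in auto)
    have c2: "continuous_on {0..} h2" by (rule continuous_on_vector_derivative) (use D2 in auto)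
    obtain Mh where Mh: "Mh \<ge> 0" "\<forall>x\<ge>0. \<bar>h x\<bar> \<le> Mh" using bounded_beyond[OF c0 hz] by blast
    obtain Mh1 where Mh1: "Mh1 \<ge> 0" "\<forall>x\<ge>0. \<bar>h1 x\<bar> \<le> Mh1" using bounded_beyond[OF c1 h1z] by blast
    obtain Mh2 where Mh2: "Mh2 \<ge> 0" "\<forall>x\<ge>0. \<bar>h2 x\<bar> \<le> Mh2" using bounded_beyond[OF c2 h2z] by blast
    obtain Mh3 where Mh3: "Mh3 \<ge> 0" "\<forall>x\<ge>0. \<bar>h3 x\<bar> \<le> Mh3" using bounded_beyond[OF c3 h3z] by blast
    have t1: "\<forall>x\<ge>0. \<bar>x * h1 x\<bar> \<le> R * Mh1" by (rule times_bound[OF Mh1(2) h1z R])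
    have t2: "\<forall>x\<ge>0. \<bar>x * h2 x\<bar> \<le> R * Mh2" by (rule times_bound[OF Mh2(2) h2z R])
    have t3: "\<forall>x\<ge>0. \<bar>x * h3 x\<bar> \<le> R * Mh3" by (rule times_bound[OF Mh3(2) h3z R])
    define p0 where "p0 = (\<lambda>u. u * h u)"
    define p1 where "p1 = (\<lambda>u. h u + u * h1 u)"
    define p2 where "p2 = (\<lambda>u. 2 * h1 u + u * h2 u)"
    define p3 where "p3 = (\<lambda>u. 3 * h2 u + u * h3 u)"
    define M1 where "M1 = Mh + R * Mh1"
    define M2 where "M2 = 2 * Mh1 + R * Mh2"
    define M3 where "M3 = 3 * Mh2 + R * Mh3"
    have r0: "(h has_real_derivative h1 v) (at v within {0..})" if "v \<ge> 0" for v
      using D0 that by (simp add: has_real_derivative_iff_has_vector_derivative)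
    have r1: "(h1 has_real_derivative h2 v) (at v within {0..})" if "v \<ge> 0" for v
      using D1' that by (simp add: has_real_derivative_iff_has_vector_derivative)
    have r2: "(h2 has_real_derivative h3 v) (at v within {0..})" if "v \<ge> 0" for v
      using D2 that by (simp add: has_real_derivative_iff_has_vector_derivative)
    have dp0: "\<forall>v\<ge>0. (p0 has_real_derivative p1 v) (at v within {0..})"
      unfolding p0_def p1_def using r0 by (auto intro!: derivative_eq_intros)
    have dp1: "\<forall>v\<ge>0. (p1 has_real_derivative p2 v) (at v within {0..})"
      unfolding p1_def p2_def using r0 r1 by (auto intro!: derivative_eq_intros)
    have dp2: "\<forall>v\<ge>0. (p2 has_real_derivative p3 v) (at v within {0..})"
      unfolding p2_def p3_def using r1 r2 by (auto intro!: derivative_eq_intros)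
    have B1: "\<forall>v\<ge>0. \<bar>p1 v\<bar> \<le> M1" unfolding p1_def M1_def
      using Mh t1 by (smt (verit, best))
    have B2: "\<forall>v\<ge>0. \<bar>p2 v\<bar> \<le> M2" unfolding p2_def M2_def
      using Mh1 t2 by (smt (verit, best))
    have B3: "\<forall>v\<ge>0. \<bar>p3 v\<bar> \<le> M3" unfolding p3_def M3_def
      using Mh2 t3 by (smt (verit, best))
    have Dh: "D1 h u = h1 u" if "u \<ge> 0" for u
      unfolding D1_def by (rule vector_derivative_within[OF nontriv0[OF that]]) (use D0 that in auto)
    have DDh: "D1 (D1 h) u = h2 u" if "u \<ge> 0" for u
    proof -
      have "(D1 h has_vector_derivative h2 u) (at u within {0..})"
        by (rule has_vector_derivative_transform_within[of h1 "h2 u" u "{0..}" 1])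
           (use D1' that Dh in auto)
      then show ?thesis
        by (subst D1_def[of "D1 h" u], intro vector_derivative_within[OF nontriv0[OF that]])
    qed
    have Ah: "\<forall>u\<ge>0. Ahat h u = p2 u - p1 u + p1 0"
      using Dh DDh by (simp add: Ahat_def p1_def p2_def algebra_simps)
    note TC = taylor_cons[OF dp0 dp1 dp2 B1 B2 B3]
    have supp: "u * \<bar>p0 (u+a) + p0 (u-a) - 2 * p0 u\<bar> \<le> (R + a) * (a^2 * M2 + 2 * a^3 * M3)"
      if a: "0 \<le> a" "a \<le> u" for u a
    proof -
      have e1: "\<bar>p0 (u+a) - p0 u - a * p1 u - a^2/2 * p2 u\<bar> \<le> M3 * a^3"
        using TC(1)[of u a] a by auto
      have e2: "\<bar>p0 (u-a) - p0 u + a * p1 u - a^2/2 * p2 u\<bar> \<le> M3 * a^3"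
        using TC(2)[of a u] a by auto
      have e3: "\<bar>a^2 * p2 u\<bar> \<le> a^2 * M2" using B2 a
        by (simp add: abs_mult mult_left_mono)
      have Db: "\<bar>p0 (u+a) + p0 (u-a) - 2 * p0 u\<bar> \<le> a^2 * M2 + 2 * a^3 * M3"
      proof -
        define X where "X = p0 (u+a) - p0 u - a * p1 u - a^2/2 * p2 u"
        define Y where "Y = p0 (u-a) - p0 u + a * p1 u - a^2/2 * p2 u"
        define Z where "Z = a^2 * p2 u"
        have "p0 (u+a) + p0 (u-a) - 2 * p0 u = X + Y + Z"
          unfolding X_def Y_def Z_def by (simp add: field_simps)
        moreover have "\<bar>X + Y + Z\<bar> \<le> \<bar>X\<bar> + \<bar>Y\<bar> + \<bar>Z\<bar>" by linarith
        moreover have "2 * a^3 * M3 = M3 * a^3 + M3 * a^3" by simp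
        ultimately show ?thesis using e1 e2 e3 unfolding X_def[symmetric] Y_def[symmetric] Z_def[symmetric]
          by linarith
      qed
      show ?thesis
      proof (cases "u < R + a")
        case True
        have "u * \<bar>p0 (u+a) + p0 (u-a) - 2 * p0 u\<bar> \<le> (R+a) * \<bar>p0 (u+a) + p0 (u-a) - 2 * p0 u\<bar>"
          using True by (intro mult_right_mono) auto
        also have "\<dots> \<le> (R + a) * (a^2 * M2 + 2 * a^3 * M3)"
          using Db R a by (intro mult_left_mono) auto
        finally show ?thesis .
      next
        case False
        then have "p0 (u+a) = 0" "p0 (u-a) = 0" "p0 u = 0" using hz' a
          by (auto simp: p0_def)
        then show ?thesis using R a Mh1 Mh2 Mh3 Mh
          by (simp add: M2_def M3_def)
      qed
    qed
    show ?thesis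
      apply (rule exI[of _ p0], rule exI[of _ p1], rule exI[of _ p2], rule exI[of _ p3])
      apply (rule exI[of _ M1], rule exI[of _ M2], rule exI[of _ M3], rule exI[of _ R])
      using Mh Mh1 Mh2 Mh3 R Ah dp0 dp1 dp2 B1 B2 B3 supp
      by (auto simp: M1_def M2_def M3_def p0_def)
  next
    case 2
    then obtain c where hc: "\<forall>x\<ge>0. h x = c" by blast
    have Dh: "D1 h u = 0" if "u \<ge> 0" for u
      unfolding D1_def
      by (rule vector_derivative_within[OF nontriv0[OF that]],
          rule has_vector_derivative_transform_within[of "\<lambda>_. c" 0 u "{0..}" 1])
         (use hc that in auto)
    have DDh: "D1 (D1 h) u = 0" if "u \<ge> 0" for u
    proof -
      have "(D1 h has_vector_derivative 0) (at u within {0..})"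
        by (rule has_vector_derivative_transform_within[of "\<lambda>_. 0" 0 u "{0..}" 1])
           (use that Dh in auto)
      then show ?thesis
        by (subst D1_def[of "D1 h" u], intro vector_derivative_within[OF nontriv0[OF that]])
    qed
    have Ah: "\<forall>u\<ge>0. Ahat h u = 0" using Dh DDh hc by (simp add: Ahat_def)
    show ?thesis
      apply (rule exI[of _ "\<lambda>u. c * u"], rule exI[of _ "\<lambda>u. c"], rule exI[of _ "\<lambda>u. 0"], rule exI[of _ "\<lambda>u. 0"])
      apply (rule exI[of _ "\<bar>c\<bar>"], rule exI[of _ 0], rule exI[of _ 0], rule exI[of _ 0])
      using hc Ah by (auto intro!: derivative_eq_intros simp: algebra_simps)
  qed
qed

definition GG :: "nat \<Rightarrow> nat \<Rightarrow> real \<Rightarrow> (real \<Rightarrow> real) \<Rightarrow> nat \<Rightarrow> real" where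
  "GG L N d h k = real k / real N * h (d * real L * real k / real N)"

lemma muhat_GG: "muhat L N d \<xi> h = (\<Sum>z<L. GG L N d h (\<xi> z))"
  by (simp add: muhat_def GG_def)

lemma sum_two:
  fixes f :: "nat \<Rightarrow> real"
  assumes "x < L" "y < L" "x \<noteq> y"
  shows "(\<Sum>z<L. f z) = f x + f y + (\<Sum>z\<in>{..<L} - {x} - {y}. f z)"
proof -
  have "(\<Sum>z<L. f z) = f x + (\<Sum>z\<in>{..<L} - {x}. f z)"
    by (rule sum.remove) (use assms in auto)
  also have "(\<Sum>z\<in>{..<L} - {x}. f z) = f y + (\<Sum>z\<in>{..<L} - {x} - {y}. f z)"
    by (rule sum.remove) (use assms in auto)
  finally show ?thesis by simp
qed

lemma muhat_move:
  assumes "x < L" "y < L" "x \<noteq> y"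
  shows "muhat L N d (move \<eta> x y) h - muhat L N d \<eta> h =
    (GG L N d h (\<eta> x - 1) - GG L N d h (\<eta> x)) + (GG L N d h (\<eta> y + 1) - GG L N d h (\<eta> y))"
proof -
  have "(\<Sum>z\<in>{..<L} - {x} - {y}. GG L N d h (move \<eta> x y z)) = (\<Sum>z\<in>{..<L} - {x} - {y}. GG L N d h (\<eta> z))"
    by (rule sum.cong) (auto simp: move_def)
  then show ?thesis
    unfolding muhat_GG sum_two[OF assms, of "\<lambda>z. GG L N d h (move \<eta> x y z)"]
      sum_two[OF assms, of "\<lambda>z. GG L N d h (\<eta> z)"]
    using assms by (simp add: move_def)
qed

lemma sum_minus1:
  fixes f :: "nat \<Rightarrow> real"
  assumes "x < L"
  shows "(\<Sum>y\<in>{..<L} - {x}. f y) = (\<Sum>y<L. f y) - f x"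
  using sum.remove[of "{..<L}" x f] assms by simp

lemma sum_lin:
  fixes f g :: "nat \<Rightarrow> real"
  shows "(\<Sum>y\<in>S. P * f y + Q * g y) = P * sum f S + Q * sum g S"
  by (simp add: sum.distrib sum_distrib_left)

lemma gen_formula:
  fixes d :: real and h :: "real \<Rightarrow> real" and \<eta> :: "nat \<Rightarrow> nat"
  assumes "\<eta> \<in> Omega L N"
  defines "A \<equiv> (\<lambda>k. GG L N d h (k - 1) - GG L N d h k)"
    and "B \<equiv> (\<lambda>k. GG L N d h (k + 1) - GG L N d h k)"
  shows "gen L d (\<lambda>\<xi>. muhat L N d \<xi> h) \<eta> =
    (\<Sum>x<L. real (\<eta> x) * (d * real L + real N - d - real (\<eta> x)) * A (\<eta> x)
          + (d + real (\<eta> x)) * (real N - real (\<eta> x)) * B (\<eta> x))"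
proof -
  have sN: "(\<Sum>y<L. real (\<eta> y)) = real N"
    using assms(1) unfolding Omega_def by (simp flip: of_nat_sum)
  have "gen L d (\<lambda>\<xi>. muhat L N d \<xi> h) \<eta> =
     (\<Sum>x<L. \<Sum>y\<in>{..<L} - {x}. real (\<eta> x) * A (\<eta> x) * (d + real (\<eta> y))
         + real (\<eta> x) * ((d + real (\<eta> y)) * B (\<eta> y)))"
    unfolding gen_def
    by (intro sum.cong refl, subst muhat_move) (auto simp: A_def B_def algebra_simps)
  also have "\<dots> = (\<Sum>x<L. real (\<eta> x) * A (\<eta> x) * (\<Sum>y\<in>{..<L} - {x}. (d + real (\<eta> y)))
        + real (\<eta> x) * (\<Sum>y\<in>{..<L} - {x}. (d + real (\<eta> y)) * B (\<eta> y)))"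
    by (intro sum.cong refl, rule sum_lin)
  also have "\<dots> = (\<Sum>x<L. real (\<eta> x) * A (\<eta> x) * (d * real L + real N - d - real (\<eta> x))
        + (real (\<eta> x) * (\<Sum>y<L. (d + real (\<eta> y)) * B (\<eta> y))
           - real (\<eta> x) * ((d + real (\<eta> x)) * B (\<eta> x))))"
    by (intro sum.cong refl) (simp add: sum_minus1 sum.distrib sN algebra_simps)
  also have "\<dots> = (\<Sum>x<L. real (\<eta> x) * A (\<eta> x) * (d * real L + real N - d - real (\<eta> x))
        - real (\<eta> x) * ((d + real (\<eta> x)) * B (\<eta> x)))
        + real N * (\<Sum>y<L. (d + real (\<eta> y)) * B (\<eta> y))"
    by (simp add: sum.distrib sum_subtractf sum_distrib_right[symmetric] sN algebra_simps)
  also have "\<dots> = (\<Sum>x<L. real (\<eta> x) * (d * real L + real N - d - real (\<eta> x)) * A (\<eta> x)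
          + (d + real (\<eta> x)) * (real N - real (\<eta> x)) * B (\<eta> x))"
    by (simp add: sum_distrib_left sum.distrib[symmetric] sum_subtractf[symmetric] algebra_simps)
  finally show ?thesis .
qed

lemma site_identity:
  fixes k N L a P1 P2 P10 X Y :: real
  assumes "N > 0" "L > 0" "a > 0"
  defines "D \<equiv> a * N" and "d \<equiv> a * N / L"
  defines "Dp \<equiv> a * P1 + a^2/2 * P2 + X" and "Dm \<equiv> - a * P1 + a^2/2 * P2 + Y"
  shows "(k * (D + N - d - k) * (Dm / D) + (d + k) * (N - k) * (Dp / D)) / D
           - k / N * (P2 - P1 + P10) + P10 * k / N - P10 / L
       = k / N * ((X + Y) / a^2) + k / N * ((a^2/2 * P2 + Y) / a) - k / N * (d * Dm / (a * D))
         - k / N * ((a * k) * (Dm + Dp) / (a^2 * D)) + (P1 - P10) / L + (a * P2 / 2 + X / a) / L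
         - k / N * (d * Dp / (a * D))"
  using assms unfolding D_def d_def Dp_def Dm_def
  apply (simp add: field_simps)
  by algebra

lemma kfac:
  fixes k N Z B :: real
  assumes "0 \<le> k" "0 < N" "k \<noteq> 0 \<Longrightarrow> \<bar>Z\<bar> \<le> B"
  shows "\<bar>k / N * Z\<bar> \<le> k / N * B"
proof (cases "k = 0")
  case False
  then have "\<bar>k / N * Z\<bar> = k / N * \<bar>Z\<bar>" using assms by (simp add: abs_mult)
  also have "\<dots> \<le> k / N * B" using assms False by (intro mult_left_mono) auto
  finally show ?thesis .
qed simp

lemma div_bound:
  fixes Z B c :: real
  assumes "\<bar>Z\<bar> \<le> B" "0 < c"
  shows "\<bar>Z / c\<bar> \<le> B / c"
  using assms by (simp add: divide_right_mono)

lemma tri7: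
  fixes t1 t2 t3 t4 t5 t6 t7 b1 b2 b3 b4 b5 b6 b7 :: real
  assumes "\<bar>t1\<bar> \<le> b1" "\<bar>t2\<bar> \<le> b2" "\<bar>t3\<bar> \<le> b3" "\<bar>t4\<bar> \<le> b4" "\<bar>t5\<bar> \<le> b5"
    "\<bar>t6\<bar> \<le> b6" "\<bar>t7\<bar> \<le> b7"
  shows "\<bar>t1 + t2 - t3 - t4 + t5 + t6 - t7\<bar> \<le> b1 + b2 + b3 + b4 + b5 + b7 + b6"
  using assms by linarith

lemma site_bound:
  fixes k N L a P1 P2 P10 Dp Dm M1 M2 M3 R :: real
  assumes pos: "N > 0" "L > 0" "a > 0" "0 \<le> k"
    and Ms: "0 \<le> M1" "0 \<le> M2" "0 \<le> M3" "0 \<le> R"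
    and hX: "\<bar>Dp - a * P1 - a^2/2 * P2\<bar> \<le> M3 * a^3"
    and hY: "k \<noteq> 0 \<Longrightarrow> \<bar>Dm + a * P1 - a^2/2 * P2\<bar> \<le> M3 * a^3"
    and hDp: "\<bar>Dp\<bar> \<le> M1 * a"
    and hDm: "k \<noteq> 0 \<Longrightarrow> \<bar>Dm\<bar> \<le> M1 * a"
    and hP2: "\<bar>P2\<bar> \<le> M2"
    and hP1: "\<bar>P1 - P10\<bar> \<le> M2 * (a * k)"
    and hS: "k \<noteq> 0 \<Longrightarrow> (a * k) * \<bar>Dp + Dm\<bar> \<le> (R + a) * (a^2 * M2 + 2 * a^3 * M3)"
  defines "D \<equiv> a * N" and "d \<equiv> a * N / L"
  shows "\<bar>(k * (D + N - d - k) * (Dm / D) + (d + k) * (N - k) * (Dp / D)) / D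
           - k / N * (P2 - P1 + P10) + P10 * k / N - P10 / L\<bar>
         \<le> k / N * (2 * M3 * a + (a * M2 / 2 + M3 * a^2) + d * M1 / D
                    + (R + a) * (M2 + 2 * a * M3) / D + M2 * d + d * M1 / D)
           + (a * M2 / 2 + M3 * a^2) / L"
proof -
  define X where "X = Dp - a * P1 - a^2/2 * P2"
  define Y where "Y = Dm + a * P1 - a^2/2 * P2"
  have eDp: "Dp = a * P1 + a^2/2 * P2 + X" and eDm: "Dm = - a * P1 + a^2/2 * P2 + Y"
    by (simp_all add: X_def Y_def)
  have Dpos: "D > 0" "d > 0" using pos by (simp_all add: D_def d_def)
  have id: "(k * (D + N - d - k) * (Dm / D) + (d + k) * (N - k) * (Dp / D)) / D
           - k / N * (P2 - P1 + P10) + P10 * k / N - P10 / L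
       = k / N * ((X + Y) / a^2) + k / N * ((a^2/2 * P2 + Y) / a) - k / N * (d * Dm / (a * D))
         - k / N * ((a * k) * (Dm + Dp) / (a^2 * D)) + (P1 - P10) / L + (a * P2 / 2 + X / a) / L
         - k / N * (d * Dp / (a * D))"
    unfolding D_def d_def eDp eDm
    by (rule site_identity[OF pos(1-3)])
  have b1: "\<bar>k / N * ((X + Y) / a^2)\<bar> \<le> k / N * (2 * M3 * a)"
  proof (rule kfac[OF pos(4,1)])
    assume "k \<noteq> 0"
    have "\<bar>X + Y\<bar> \<le> 2 * M3 * a^3" using hX hY[OF \<open>k\<noteq>0\<close>] unfolding X_def Y_def by linarith
    then have "\<bar>(X + Y) / a^2\<bar> \<le> 2 * M3 * a^3 / a^2" using pos by (intro div_bound) auto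
    also have "\<dots> = 2 * M3 * a" using pos by (simp add: power2_eq_square power3_eq_cube)
    finally show "\<bar>(X + Y) / a^2\<bar> \<le> 2 * M3 * a" .
  qed
  have b2: "\<bar>k / N * ((a^2/2 * P2 + Y) / a)\<bar> \<le> k / N * (a * M2 / 2 + M3 * a^2)"
  proof (rule kfac[OF pos(4,1)])
    assume "k \<noteq> 0"
    have "\<bar>a^2/2 * P2\<bar> \<le> a^2/2 * M2" using hP2 by (simp add: abs_mult mult_left_mono)
    then have "\<bar>a^2/2 * P2 + Y\<bar> \<le> a^2/2 * M2 + M3 * a^3" using hY[OF \<open>k\<noteq>0\<close>] unfolding Y_def by linarith
    then have "\<bar>(a^2/2 * P2 + Y) / a\<bar> \<le> (a^2/2 * M2 + M3 * a^3) / a" using pos by (intro div_bound) auto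
    also have "\<dots> = a * M2 / 2 + M3 * a^2" using pos by (simp add: field_simps power2_eq_square power3_eq_cube)
    finally show "\<bar>(a^2/2 * P2 + Y) / a\<bar> \<le> a * M2 / 2 + M3 * a^2" .
  qed
  have b3: "\<bar>k / N * (d * Dm / (a * D))\<bar> \<le> k / N * (d * M1 / D)"
  proof (rule kfac[OF pos(4,1)])
    assume "k \<noteq> 0"
    have "\<bar>d * Dm\<bar> \<le> d * (M1 * a)" using hDm[OF \<open>k\<noteq>0\<close>] Dpos by (simp add: abs_mult mult_left_mono)
    then have "\<bar>d * Dm / (a * D)\<bar> \<le> d * (M1 * a) / (a * D)" using pos Dpos by (intro div_bound) auto
    also have "\<dots> = d * M1 / D" using pos by simp
    finally show "\<bar>d * Dm / (a * D)\<bar> \<le> d * M1 / D" .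
  qed
  have b7: "\<bar>k / N * (d * Dp / (a * D))\<bar> \<le> k / N * (d * M1 / D)"
  proof (rule kfac[OF pos(4,1)])
    have "\<bar>d * Dp\<bar> \<le> d * (M1 * a)" using hDp Dpos by (simp add: abs_mult mult_left_mono)
    then have "\<bar>d * Dp / (a * D)\<bar> \<le> d * (M1 * a) / (a * D)" using pos Dpos by (intro div_bound) auto
    also have "\<dots> = d * M1 / D" using pos by simp
    finally show "\<bar>d * Dp / (a * D)\<bar> \<le> d * M1 / D" .
  qed
  have b4: "\<bar>k / N * ((a * k) * (Dm + Dp) / (a^2 * D))\<bar> \<le> k / N * ((R + a) * (M2 + 2 * a * M3) / D)"
  proof (rule kfac[OF pos(4,1)])
    assume "k \<noteq> 0"
    have "\<bar>(a * k) * (Dm + Dp)\<bar> \<le> (R + a) * (a^2 * M2 + 2 * a^3 * M3)"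
      using hS[OF \<open>k\<noteq>0\<close>] pos by (simp add: abs_mult add.commute)
    then have "\<bar>(a * k) * (Dm + Dp) / (a^2 * D)\<bar> \<le> (R + a) * (a^2 * M2 + 2 * a^3 * M3) / (a^2 * D)"
      using pos Dpos by (intro div_bound) auto
    also have "\<dots> = (R + a) * (M2 + 2 * a * M3) / D" using pos Dpos
      by (simp add: field_simps power2_eq_square power3_eq_cube)
    finally show "\<bar>(a * k) * (Dm + Dp) / (a^2 * D)\<bar> \<le> (R + a) * (M2 + 2 * a * M3) / D" .
  qed
  have b5: "\<bar>(P1 - P10) / L\<bar> \<le> k / N * (M2 * d)"
  proof -
    have "\<bar>(P1 - P10) / L\<bar> \<le> M2 * (a * k) / L" using hP1 pos by (intro div_bound) auto
    also have "\<dots> = k / N * (M2 * d)" using pos by (simp add: d_def field_simps)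
    finally show ?thesis .
  qed
  have b6: "\<bar>(a * P2 / 2 + X / a) / L\<bar> \<le> (a * M2 / 2 + M3 * a^2) / L"
  proof -
    have "\<bar>a * P2 / 2\<bar> \<le> a * M2 / 2" using hP2 pos by (simp add: abs_mult mult_left_mono)
    moreover have "\<bar>X / a\<bar> \<le> M3 * a^3 / a" using hX pos unfolding X_def by (intro div_bound) auto
    moreover have "M3 * a^3 / a = M3 * a^2" using pos by (simp add: power2_eq_square power3_eq_cube)
    ultimately have "\<bar>a * P2 / 2 + X / a\<bar> \<le> a * M2 / 2 + M3 * a^2" by linarith
    then show ?thesis using pos by (intro div_bound) auto
  qed
  have distr: "k / N * (2 * M3 * a + (a * M2 / 2 + M3 * a^2) + d * M1 / D
                    + (R + a) * (M2 + 2 * a * M3) / D + M2 * d + d * M1 / D)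
     = k / N * (2 * M3 * a) + k / N * (a * M2 / 2 + M3 * a^2) + k / N * (d * M1 / D)
       + k / N * ((R + a) * (M2 + 2 * a * M3) / D) + k / N * (M2 * d) + k / N * (d * M1 / D)"
    by (simp only: distrib_left)
  show ?thesis unfolding id distr by (rule tri7[OF b1 b2 b3 b4 b5 b6 b7])
qed

lemma site_bound':
  fixes k N L d a P1 P2 P10 Dp Dm M1 M2 M3 R :: real
  assumes pos: "N > 0" "L > 0" "d > 0" "0 \<le> k" and adef: "a = d * L / N"
    and Ms: "0 \<le> M1" "0 \<le> M2" "0 \<le> M3" "0 \<le> R"
    and hX: "\<bar>Dp - a * P1 - a^2/2 * P2\<bar> \<le> M3 * a^3"
    and hY: "k \<noteq> 0 \<Longrightarrow> \<bar>Dm + a * P1 - a^2/2 * P2\<bar> \<le> M3 * a^3"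
    and hDp: "\<bar>Dp\<bar> \<le> M1 * a"
    and hDm: "k \<noteq> 0 \<Longrightarrow> \<bar>Dm\<bar> \<le> M1 * a"
    and hP2: "\<bar>P2\<bar> \<le> M2"
    and hP1: "\<bar>P1 - P10\<bar> \<le> M2 * (a * k)"
    and hS: "k \<noteq> 0 \<Longrightarrow> (a * k) * \<bar>Dp + Dm\<bar> \<le> (R + a) * (a^2 * M2 + 2 * a^3 * M3)"
  shows "\<bar>(k * (d * L + N - d - k) * (Dm / (d * L)) + (d + k) * (N - k) * (Dp / (d * L))) / (d * L)
           - k / N * (P2 - P1 + P10) + P10 * k / N - P10 / L\<bar>
         \<le> k / N * (2 * M3 * a + (a * M2 / 2 + M3 * a^2) + d * M1 / (d * L)
                    + (R + a) * (M2 + 2 * a * M3) / (d * L) + M2 * d + d * M1 / (d * L))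
           + (a * M2 / 2 + M3 * a^2) / L"
proof -
  have apos: "a > 0" using pos adef by simp
  have e1: "a * N = d * L" and e3: "d * L / L = d" using pos adef by simp_all
  have "\<bar>(k * (a * N + N - a * N / L - k) * (Dm / (a * N)) + (a * N / L + k) * (N - k) * (Dp / (a * N))) / (a * N)
           - k / N * (P2 - P1 + P10) + P10 * k / N - P10 / L\<bar>
         \<le> k / N * (2 * M3 * a + (a * M2 / 2 + M3 * a^2) + (a * N / L) * M1 / (a * N)
                    + (R + a) * (M2 + 2 * a * M3) / (a * N) + M2 * (a * N / L) + (a * N / L) * M1 / (a * N))
           + (a * M2 / 2 + M3 * a^2) / L"
    by (rule site_bound[OF pos(1,2) apos pos(4) Ms]) (use hX hY hDp hDm hP2 hP1 hS in auto)
  then show ?thesis unfolding e1 e3 .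
qed

lemma eta_bound:
  fixes p0 p1 p2 p3 :: "real \<Rightarrow> real" and h :: "real \<Rightarrow> real"
  assumes Ms: "0 \<le> M1" "0 \<le> M2" "0 \<le> M3" "0 \<le> R"
    and P0: "\<forall>u\<ge>0. p0 u = u * h u" and AH: "\<forall>u\<ge>0. Ahat h u = p2 u - p1 u + p1 0"
    and d0: "\<forall>v\<ge>0. (p0 has_real_derivative p1 v) (at v within {0..})"
    and d1: "\<forall>v\<ge>0. (p1 has_real_derivative p2 v) (at v within {0..})"
    and d2: "\<forall>v\<ge>0. (p2 has_real_derivative p3 v) (at v within {0..})"
    and B1: "\<forall>v\<ge>0. \<bar>p1 v\<bar> \<le> M1" and B2: "\<forall>v\<ge>0. \<bar>p2 v\<bar> \<le> M2"
    and B3: "\<forall>v\<ge>0. \<bar>p3 v\<bar> \<le> M3"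
    and SU: "\<forall>u a. 0 \<le> a \<longrightarrow> a \<le> u \<longrightarrow>
        u * \<bar>p0 (u+a) + p0 (u-a) - 2 * p0 u\<bar> \<le> (R + a) * (a^2 * M2 + 2 * a^3 * M3)"
    and LN: "L \<ge> 1" "N \<ge> 1" and dpos: "d > 0" and eta: "\<eta> \<in> Omega L N"
  defines "a \<equiv> d * real L / real N"
  shows "\<bar>gen L d (\<lambda>\<xi>. muhat L N d \<xi> h) \<eta> / (d * real L) - muhat L N d \<eta> (Ahat h)\<bar>
     \<le> (2 * M3 * a + (a * M2 / 2 + M3 * a^2) + d * M1 / (d * L)
                    + (R + a) * (M2 + 2 * a * M3) / (d * L) + M2 * d + d * M1 / (d * L))
           + (a * M2 / 2 + M3 * a^2)"
proof -
  note TC = taylor_cons[OF d0 d1 d2 B1 B2 B3]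
  define c1 where "c1 = 2 * M3 * a + (a * M2 / 2 + M3 * a^2) + d * M1 / (d * L)
                    + (R + a) * (M2 + 2 * a * M3) / (d * L) + M2 * d + d * M1 / (d * L)"
  define c2 where "c2 = a * M2 / 2 + M3 * a^2"
  have Npos: "real N > 0" and Lpos: "real L > 0" using LN by auto
  have apos: "a > 0" using Npos Lpos dpos by (simp add: a_def)
  have sN: "(\<Sum>x<L. real (\<eta> x)) = real N"
    using eta unfolding Omega_def by (simp flip: of_nat_sum)
  have GG: "GG L N d h k = p0 (a * real k) / (d * real L)" for k
  proof -
    have "p0 (a * real k) = a * real k * h (a * real k)" using P0 apos by simp
    moreover have "d * real L * real k / real N = a * real k" by (simp add: a_def)
    ultimately show ?thesis using Npos Lpos dpos by (simp add: GG_def a_def field_simps)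
  qed
  define S where "S = (\<lambda>k::nat. (real k * (d * L + N - d - real k) * ((p0 (a * real k - a) - p0 (a * real k)) / (d * L))
        + (d + real k) * (N - real k) * ((p0 (a * real k + a) - p0 (a * real k)) / (d * L))) / (d * L)
        - real k / N * (p2 (a * real k) - p1 (a * real k) + p1 0) + p1 0 * real k / N - p1 0 / L)"
  have site: "\<bar>S k\<bar> \<le> real k / N * c1 + c2 / L" for k
    unfolding S_def c1_def c2_def
  proof (rule site_bound'[OF Npos Lpos dpos _ a_def[THEN meta_eq_to_obj_eq] Ms])
    let ?u = "a * real k"
    have u0: "0 \<le> ?u" using apos by simp
    show "\<bar>p0 (?u + a) - p0 ?u - a * p1 ?u - a^2/2 * p2 ?u\<bar> \<le> M3 * a^3"
      using TC(1)[OF u0] apos by simp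
    show "\<bar>p0 (?u + a) - p0 ?u\<bar> \<le> M1 * a" using TC(4)[OF u0] apos by simp
    show "\<bar>p2 ?u\<bar> \<le> M2" using B2 u0 by simp
    show "\<bar>p1 ?u - p1 0\<bar> \<le> M2 * ?u" using TC(3)[OF u0] .
    assume "real k \<noteq> 0"
    then have au: "a \<le> ?u" using apos by simp
    show "\<bar>p0 (?u - a) - p0 ?u + a * p1 ?u - a^2/2 * p2 ?u\<bar> \<le> M3 * a^3"
      using TC(2)[OF au] apos by simp
    show "\<bar>p0 (?u - a) - p0 ?u\<bar> \<le> M1 * a" using TC(5)[OF au] apos by simp
    show "?u * \<bar>p0 (?u + a) - p0 ?u + (p0 (?u - a) - p0 ?u)\<bar> \<le> (R + a) * (a^2 * M2 + 2 * a^3 * M3)"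
    proof -
      have "p0 (?u + a) - p0 ?u + (p0 (?u - a) - p0 ?u) = p0 (?u + a) + p0 (?u - a) - 2 * p0 ?u" by simp
      moreover have "?u * \<bar>p0 (?u + a) + p0 (?u - a) - 2 * p0 ?u\<bar> \<le> (R + a) * (a^2 * M2 + 2 * a^3 * M3)"
        using SU apos au by simp
      ultimately show ?thesis by simp
    qed
  qed simp
  have Aeq: "real k * (d * L + N - d - real k) * (GG L N d h (k - 1) - GG L N d h k)
      = real k * (d * L + N - d - real k) * ((p0 (a * real k - a) - p0 (a * real k)) / (d * L))" for k
  proof (cases "k = 0")
    case False
    then have "real (k - 1) = real k - 1" by simp
    then show ?thesis by (simp add: GG algebra_simps diff_divide_distrib)
  qed simp
  have Beq: "GG L N d h (k + 1) - GG L N d h k = (p0 (a * real k + a) - p0 (a * real k)) / (d * L)" for k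
    by (simp add: GG algebra_simps diff_divide_distrib)
  have gen_eq: "gen L d (\<lambda>\<xi>. muhat L N d \<xi> h) \<eta> / (d * real L)
     = (\<Sum>x<L. (real (\<eta> x) * (d * L + N - d - real (\<eta> x)) * ((p0 (a * real (\<eta> x) - a) - p0 (a * real (\<eta> x))) / (d * L))
        + (d + real (\<eta> x)) * (N - real (\<eta> x)) * ((p0 (a * real (\<eta> x) + a) - p0 (a * real (\<eta> x))) / (d * L))) / (d * L))"
    unfolding gen_formula[OF eta] sum_divide_distrib Aeq Beq ..
  have mu_eq: "muhat L N d \<eta> (Ahat h) = (\<Sum>x<L. real (\<eta> x) / N * (p2 (a * real (\<eta> x)) - p1 (a * real (\<eta> x)) + p1 0))"
    unfolding muhat_def
  proof (intro sum.cong refl)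
    fix x
    have "d * real L * real (\<eta> x) / real N = a * real (\<eta> x)" by (simp add: a_def)
    then show "real (\<eta> x) / real N * Ahat h (d * real L * real (\<eta> x) / real N) =
       real (\<eta> x) / real N * (p2 (a * real (\<eta> x)) - p1 (a * real (\<eta> x)) + p1 0)"
      using AH apos by simp
  qed
  have s1: "(\<Sum>x<L. p1 0 * real (\<eta> x) / N) = p1 0"
    using sN Npos by (simp add: sum_divide_distrib[symmetric] sum_distrib_left[symmetric])
  have s2: "(\<Sum>x<L. p1 0 / real L) = p1 0" using Lpos by simp
  have "gen L d (\<lambda>\<xi>. muhat L N d \<xi> h) \<eta> / (d * real L) - muhat L N d \<eta> (Ahat h)
       = (\<Sum>x<L. S (\<eta> x))"
    unfolding gen_eq mu_eq S_def sum.distrib sum_subtractf s1 s2 by simp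
  also have "\<bar>\<dots>\<bar> \<le> (\<Sum>x<L. \<bar>S (\<eta> x)\<bar>)" by (rule sum_abs)
  also have "\<dots> \<le> (\<Sum>x<L. real (\<eta> x) / N * c1 + c2 / L)" by (intro sum_mono site)
  also have "\<dots> = c1 + c2"
    using sN Npos Lpos by (simp add: sum.distrib sum_divide_distrib[symmetric] sum_distrib_right[symmetric])
  finally show ?thesis unfolding c1_def c2_def .
qed

theorem lemma3p2:
  fixes \<rho> :: real and d :: "nat \<Rightarrow> real" and h :: "real \<Rightarrow> real"
  assumes "\<rho> > 0"
    and "\<And>L. d L > 0"
    and "d \<longlonglongrightarrow> 0"
    and "filterlim (\<lambda>L. d L * real L) at_top sequentially"
    and "h \<in> DA"
  shows "\<forall>Ls Ns :: nat \<Rightarrow> nat.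
           filterlim Ls at_top sequentially \<longrightarrow> filterlim Ns at_top sequentially \<longrightarrow>
           (\<lambda>k. real (Ns k) / real (Ls k)) \<longlonglongrightarrow> \<rho> \<longrightarrow>
           (\<lambda>k. SUP \<eta>\<in>Omega (Ls k) (Ns k).
               \<bar>gen (Ls k) (d (Ls k)) (\<lambda>\<xi>. muhat (Ls k) (Ns k) (d (Ls k)) \<xi> h) \<eta>
                  / (d (Ls k) * real (Ls k))
                - muhat (Ls k) (Ns k) (d (Ls k)) \<eta> (Ahat h)\<bar>) \<longlonglongrightarrow> 0"
proof (intro allI impI)
  fix Ls Ns :: "nat \<Rightarrow> nat"
  assume Ls: "filterlim Ls at_top sequentially" and Ns: "filterlim Ns at_top sequentially"
    and rho: "(\<lambda>k. real (Ns k) / real (Ls k)) \<longlonglongrightarrow> \<rho>"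
  obtain p0 p1 p2 p3 M1 M2 M3 R where Ms: "0 \<le> M1" "0 \<le> M2" "0 \<le> M3" "0 \<le> R"
    and I: "\<forall>u\<ge>0. p0 u = u * h u" "\<forall>u\<ge>0. Ahat h u = p2 u - p1 u + p1 0"
     "\<forall>v\<ge>0. (p0 has_real_derivative p1 v) (at v within {0..})"
     "\<forall>v\<ge>0. (p1 has_real_derivative p2 v) (at v within {0..})"
     "\<forall>v\<ge>0. (p2 has_real_derivative p3 v) (at v within {0..})"
     "\<forall>v\<ge>0. \<bar>p1 v\<bar> \<le> M1" "\<forall>v\<ge>0. \<bar>p2 v\<bar> \<le> M2" "\<forall>v\<ge>0. \<bar>p3 v\<bar> \<le> M3"
     "\<forall>u a. 0 \<le> a \<longrightarrow> a \<le> u \<longrightarrow>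
        u * \<bar>p0 (u+a) + p0 (u-a) - 2 * p0 u\<bar> \<le> (R + a) * (a^2 * M2 + 2 * a^3 * M3)"
    using DA_interface[OF assms(5)] by (elim exE conjE) (rule that; assumption)
  define dk where "dk = (\<lambda>k. d (Ls k))"
  define Dk where "Dk = (\<lambda>k. d (Ls k) * real (Ls k))"
  define ak where "ak = (\<lambda>k. d (Ls k) * real (Ls k) / real (Ns k))"
  define c where "c = (\<lambda>k. (2 * M3 * ak k + (ak k * M2 / 2 + M3 * (ak k)^2) + dk k * M1 / (Dk k)
                    + (R + ak k) * (M2 + 2 * ak k * M3) / (Dk k) + M2 * dk k + dk k * M1 / (Dk k))
           + (ak k * M2 / 2 + M3 * (ak k)^2))"
  define F where "F = (\<lambda>k. SUP \<eta>\<in>Omega (Ls k) (Ns k).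
               \<bar>gen (Ls k) (d (Ls k)) (\<lambda>\<xi>. muhat (Ls k) (Ns k) (d (Ls k)) \<xi> h) \<eta>
                  / (d (Ls k) * real (Ls k))
                - muhat (Ls k) (Ns k) (d (Ls k)) \<eta> (Ahat h)\<bar>)"
  have dk0: "dk \<longlonglongrightarrow> 0" unfolding dk_def by (rule filterlim_compose[OF assms(3) Ls])
  have Dkinf: "filterlim Dk at_top sequentially" unfolding Dk_def
    by (rule filterlim_compose[OF assms(4) Ls])
  have iD: "(\<lambda>k. inverse (Dk k)) \<longlonglongrightarrow> 0" by (rule tendsto_inverse_0_at_top[OF Dkinf])
  have ak0: "ak \<longlonglongrightarrow> 0"
  proof -
    have "(\<lambda>k. dk k / (real (Ns k) / real (Ls k))) \<longlonglongrightarrow> 0 / \<rho>"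
      by (rule tendsto_divide[OF dk0 rho]) (use assms(1) in auto)
    moreover have "(\<lambda>k. dk k / (real (Ns k) / real (Ls k))) = ak"
      by (auto simp: dk_def ak_def fun_eq_iff)
    ultimately show ?thesis by simp
  qed
  have c_eq: "c = (\<lambda>k. (2 * M3 * ak k + (ak k * M2 / 2 + M3 * (ak k)^2) + dk k * M1 * inverse (Dk k)
                    + (R + ak k) * (M2 + 2 * ak k * M3) * inverse (Dk k) + M2 * dk k + dk k * M1 * inverse (Dk k))
           + (ak k * M2 / 2 + M3 * (ak k)^2))"
    unfolding c_def by (simp only: divide_inverse)
  have c0: "c \<longlonglongrightarrow> 0"
  proof -
    have "c \<longlonglongrightarrow> (2 * M3 * 0 + (0 * M2 / 2 + M3 * 0^2) + 0 * M1 * 0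
                    + (R + 0) * (M2 + 2 * 0 * M3) * 0 + M2 * 0 + 0 * M1 * 0)
           + (0 * M2 / 2 + M3 * 0^2)"
      unfolding c_eq by (intro tendsto_intros ak0 dk0 iD) simp_all
    then show ?thesis by simp
  qed
  have ev: "eventually (\<lambda>k. 1 \<le> Ls k \<and> 1 \<le> Ns k) sequentially"
    using Ls Ns unfolding filterlim_at_top by (intro eventually_conj; blast)
  have bnd: "0 \<le> F k \<and> F k \<le> c k" if k: "1 \<le> Ls k" "1 \<le> Ns k" for k
  proof -
    define L where "L = Ls k"
    define N where "N = Ns k"
    define g where "g = (\<lambda>\<eta>. \<bar>gen L (d L) (\<lambda>\<xi>. muhat L N (d L) \<xi> h) \<eta> / (d L * real L)
                - muhat L N (d L) \<eta> (Ahat h)\<bar>)"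
    have Fk: "F k = (SUP \<eta>\<in>Omega L N. g \<eta>)" by (simp add: F_def g_def L_def N_def)
    have ck: "c k = (2 * M3 * (d L * real L / real N) + ((d L * real L / real N) * M2 / 2 + M3 * (d L * real L / real N)^2) + d L * M1 / (d L * L)
                    + (R + (d L * real L / real N)) * (M2 + 2 * (d L * real L / real N) * M3) / (d L * L) + M2 * d L + d L * M1 / (d L * L))
           + ((d L * real L / real N) * M2 / 2 + M3 * (d L * real L / real N)^2)"
      by (simp add: c_def ak_def dk_def Dk_def L_def N_def)
    have gb: "g \<eta> \<le> c k" if "\<eta> \<in> Omega L N" for \<eta>
      unfolding g_def ck
      by (rule eta_bound[OF Ms I]) (use k that assms(2) in \<open>auto simp: L_def N_def\<close>)
    define \<eta>0 where "\<eta>0 = (\<lambda>z::nat. if z = 0 then N else 0)"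
    have mem: "\<eta>0 \<in> Omega L N" using k unfolding Omega_def \<eta>0_def L_def N_def by auto
    have bdd: "bdd_above (g ` Omega L N)" by (rule bdd_aboveI2[where M="c k"]) (rule gb)
    have "0 \<le> g \<eta>0" by (simp add: g_def)
    also have "g \<eta>0 \<le> (SUP \<eta>\<in>Omega L N. g \<eta>)" by (rule cSUP_upper[OF mem bdd])
    finally have 1: "0 \<le> F k" using Fk by simp
    have "(SUP \<eta>\<in>Omega L N. g \<eta>) \<le> c k" by (rule cSUP_least) (use mem gb in auto)
    with 1 Fk show ?thesis by simp
  qed
  have "F \<longlonglongrightarrow> 0"
  proof (rule tendsto_sandwich[of "\<lambda>_. 0" F sequentially c])
    show "eventually (\<lambda>k. 0 \<le> F k) sequentially" using ev by eventually_elim (use bnd in auto)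
    show "eventually (\<lambda>k. F k \<le> c k) sequentially" using ev by eventually_elim (use bnd in auto)
  qed (auto intro: c0)
  then show "(\<lambda>k. SUP \<eta>\<in>Omega (Ls k) (Ns k).
               \<bar>gen (Ls k) (d (Ls k)) (\<lambda>\<xi>. muhat (Ls k) (Ns k) (d (Ls k)) \<xi> h) \<eta>
                  / (d (Ls k) * real (Ls k))
                - muhat (Ls k) (Ns k) (d (Ls k)) \<eta> (Ahat h)\<bar>) \<longlonglongrightarrow> 0"
    unfolding F_def .
qed

end
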